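(* For every integer $n\geq 1$, $Q_{2n}$ has a DVOP$[n]$ whose edge set is all of $E(Q_{2n})$.
   Context: $Q_q$ denotes the $q$-dimensional hypercube graph (vertices are $q$-tuples of $0$'s and $1$'s, adjacent iff they differ in exactly one coordinate). $P_k$ is the path with vertices $0,1,\dots,k$ and edges $\hat{j}$ joining $j-1$ and $j$. For a graph $G$, a DVOP$[k]$ is a family $\{p_v\}_{v\in V(G)}$ of embeddings $p_v:P_k\to G$ such that (a) $p_v(\hat{j})=p_{v'}(\hat{j'})$ implies $v=v'$ and $j=j'$, and (b) $p_v(0)=v$ for every $v$; its edge set is the union of the edge images of all $p_v$. *)

theory Defs
  imports Main
begin

definition hc_verts :: "nat \<Rightarrow> bool list set" where
  "hc_verts q = {xs. length xs = q}"

definition hc_adj :: "nat \<Rightarrow> bool list \<Rightarrow> bool list \<Rightarrow> bool" where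
  "hc_adj q u v \<longleftrightarrow> u \<in> hc_verts q \<and> v \<in> hc_verts q \<and> card {i. i < q \<and> u ! i \<noteq> v ! i} = 1"

definition graph_edges :: "'a set \<Rightarrow> ('a \<Rightarrow> 'a \<Rightarrow> bool) \<Rightarrow> 'a set set" where
  "graph_edges V adj = {{u, v} | u v. u \<in> V \<and> v \<in> V \<and> adj u v}"

(* embedding of the path P_k (vertices 0..k, edge j joins j-1 and j) into (V, adj):
   an injective map on vertices sending edges to edges *)
definition path_embedding :: "'a set \<Rightarrow> ('a \<Rightarrow> 'a \<Rightarrow> bool) \<Rightarrow> nat \<Rightarrow> (nat \<Rightarrow> 'a) \<Rightarrow> bool" where
  "path_embedding V adj k f \<longleftrightarrow>
     inj_on f {0..k} \<and> (\<forall>j\<in>{0..k}. f j \<in> V) \<and> (\<forall>j\<in>{1..k}. adj (f (j - 1)) (f j))"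

definition edge_img :: "(nat \<Rightarrow> 'a) \<Rightarrow> nat \<Rightarrow> 'a set" where
  "edge_img f j = {f (j - 1), f j}"

definition is_DVOP :: "'a set \<Rightarrow> ('a \<Rightarrow> 'a \<Rightarrow> bool) \<Rightarrow> nat \<Rightarrow> ('a \<Rightarrow> nat \<Rightarrow> 'a) \<Rightarrow> bool" where
  "is_DVOP V adj k p \<longleftrightarrow>
     (\<forall>v\<in>V. path_embedding V adj k (p v) \<and> p v 0 = v) \<and>
     (\<forall>v\<in>V. \<forall>v'\<in>V. \<forall>j\<in>{1..k}. \<forall>j'\<in>{1..k}.
        edge_img (p v) j = edge_img (p v') j' \<longrightarrow> v = v' \<and> j = j')"

definition DVOP_edges :: "'a set \<Rightarrow> nat \<Rightarrow> ('a \<Rightarrow> nat \<Rightarrow> 'a) \<Rightarrow> 'a set set" where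
  "DVOP_edges V k p = {edge_img (p v) j | v j. v \<in> V \<and> j \<in> {1..k}}"

end

theory Submission
  imports Defs
begin

definition flip :: "nat \<Rightarrow> bool list \<Rightarrow> bool list" where
  "flip c w = w[c := (\<not> w!c)]"

definition fc :: "nat \<Rightarrow> bool list \<Rightarrow> nat" where
  "fc k w = (if w!(2*k) = w!(2*k+1) then 2*k+1 else 2*k)"

definition st :: "nat \<Rightarrow> bool list \<Rightarrow> bool list" where
  "st k w = flip (fc k w) w"

primrec P :: "bool list \<Rightarrow> nat \<Rightarrow> bool list" where
  "P v 0 = v"
| "P v (Suc j) = st j (P v j)"

lemma length_flip[simp]: "length (flip c w) = length w"
  by (simp add: flip_def)

lemma nth_flip: "flip c w ! i = (if i = c \<and> c < length w then \<not> w!i else w!i)"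
  by (cases "c < length w") (auto simp: flip_def nth_list_update list_update_beyond)

lemma flip_flip[simp]: "flip c (flip c w) = w"
  unfolding flip_def by (cases "c < length w") (auto simp: list_update_beyond)

lemma length_st[simp]: "length (st k w) = length w"
  by (simp add: st_def)

lemma fc_range: "fc k w = 2*k \<or> fc k w = 2*k+1"
  by (simp add: fc_def)

lemma st_other: "i \<noteq> 2*k \<Longrightarrow> i \<noteq> 2*k+1 \<Longrightarrow> st k w ! i = w ! i"
  using fc_range[of k w] by (auto simp: st_def nth_flip)

lemma st_a: "Suc (2*k) < length w \<Longrightarrow> st k w ! (2*k) = (if w!(2*k) = w!Suc (2*k) then w!(2*k) else \<not> w!(2*k))"
  unfolding st_def fc_def by (cases "w!(2*k) = w!Suc (2*k)") (simp_all add: nth_flip)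

lemma st_b: "Suc (2*k) < length w \<Longrightarrow> st k w ! Suc (2*k) = (if w!(2*k) = w!Suc (2*k) then \<not> w!Suc (2*k) else w!Suc (2*k))"
  unfolding st_def fc_def by (cases "w!(2*k) = w!Suc (2*k)") (simp_all add: nth_flip)

lemma st4: assumes "2*k+1 < length w" shows "st k (st k (st k (st k w))) = w"
proof (rule nth_equalityI)
  show "length (st k (st k (st k (st k w)))) = length w" by simp
  fix i assume i: "i < length (st k (st k (st k (st k w))))"
  consider "i = 2*k" | "i = 2*k+1" | "i \<noteq> 2*k \<and> i \<noteq> 2*k+1" by blast
  then show "st k (st k (st k (st k w))) ! i = w ! i"
  proof cases
    case 1
    have "st k (st k (st k (st k w))) ! (2*k) = w ! (2*k)"
      using assms by (cases "w!(2*k)"; cases "w!(2*k+1)"; simp add: st_a st_b)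
    then show ?thesis using 1 by simp
  next
    case 2
    have "st k (st k (st k (st k w))) ! (2*k+1) = w ! (2*k+1)"
      using assms by (cases "w!(2*k)"; cases "w!(2*k+1)"; simp add: st_a st_b)
    then show ?thesis using 2 by simp
  next
    case 3 then show ?thesis by (simp add: st_other)
  qed
qed

lemma st2_ne: assumes "2*k+1 < length w" shows "st k (st k w) \<noteq> w"
proof
  assume h: "st k (st k w) = w"
  have "st k (st k w) ! (2*k) = (\<not> w ! (2*k))"
    using assms by (cases "w!(2*k)"; cases "w!Suc (2*k)"; simp add: st_a st_b)
  hence "w ! (2*k) = (\<not> w ! (2*k))" unfolding h .
  thus False by simp
qed

lemma st_inj: assumes "2*k+1 < length a" "st k a = st k b" "length b = length a"
  shows "a = b"
proof -
  have e: "st k (st k (st k (st k a))) = st k (st k (st k (st k b)))"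
    using assms(2) by (rule arg_cong[where f="\<lambda>x. st k (st k (st k x))"])
  have lb: "2*k+1 < length b" using assms(1,3) by simp
  show ?thesis using e unfolding st4[OF assms(1)] st4[OF lb] .
qed

lemma length_P[simp]: "length (P v j) = length v"
  by (induction j) auto

lemma P_stable: "j \<le> m \<Longrightarrow> c < 2*j \<Longrightarrow> P v m ! c = P v j ! c"
proof (induction m rule: dec_induct)
  case base then show ?case by simp
next
  case (step m) then show ?case by (simp add: st_other)
qed

lemma P_inj: "length v = 2*n \<Longrightarrow> length v' = 2*n \<Longrightarrow> k \<le> n \<Longrightarrow> P v k = P v' k \<Longrightarrow> v = v'"
proof (induction k)
  case 0 then show ?case by simp
next
  case (Suc k)
  have "P v k = P v' k"
  proof (rule st_inj[of k])
    show "2*k+1 < length (P v k)" using Suc.prems by simp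
    show "st k (P v k) = st k (P v' k)" using Suc.prems(4) by simp
    show "length (P v' k) = length (P v k)" using Suc.prems by simp
  qed
  then show ?case using Suc by simp
qed

lemma P_surj: "length w = 2*n \<Longrightarrow> k \<le> n \<Longrightarrow> \<exists>x. length x = 2*n \<and> P x k = w"
proof (induction k arbitrary: w)
  case 0 then show ?case by auto
next
  case (Suc k)
  obtain x where x: "length x = 2*n" "P x k = st k (st k (st k w))"
    using Suc.IH[of "st k (st k (st k w))"] Suc.prems by auto
  have "P x (Suc k) = w" using x st4[of k w] Suc.prems by simp
  with x show ?case by auto
qed

lemma P_inj_on: assumes "length v = 2*n" shows "inj_on (P v) {0..n}"
proof -
  have ne: "P v j \<noteq> P v j'" if "j < j'" "j' \<le> n" for j j'
  proof
    assume eq: "P v j = P v j'"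
    define c where "c = fc j (P v j)"
    have c: "c = 2*j \<or> c = 2*j+1" using fc_range c_def by simp
    have "P v j' ! c = P v (Suc j) ! c" using that c by (subst P_stable[of "Suc j" j']) auto
    also have "\<dots> = (\<not> P v j ! c)"
      using c that assms by (auto simp: st_def nth_flip c_def)
    finally show False using eq by simp
  qed
  show ?thesis unfolding inj_on_def
    by (metis atLeastAtMost_iff linorder_neqE_nat ne)
qed

lemma card_flip: assumes "length u = q" "c < q"
  shows "card {i. i < q \<and> u ! i \<noteq> flip c u ! i} = 1"
proof -
  have "{i. i < q \<and> u ! i \<noteq> flip c u ! i} = {c}" using assms by (auto simp: nth_flip)
  thus ?thesis by simp
qed

lemma adj_flip: assumes "hc_adj q u v" shows "\<exists>c<q. v = flip c u"
proof -
  from assms have l: "length u = q" "length v = q" and cd: "card {i. i < q \<and> u ! i \<noteq> v ! i} = 1"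
    by (auto simp: hc_adj_def hc_verts_def)
  then obtain c where c: "{i. i < q \<and> u ! i \<noteq> v ! i} = {c}" by (auto simp: card_Suc_eq)
  hence cq: "c < q" by auto
  have "v = flip c u"
  proof (rule nth_equalityI)
    show "length v = length (flip c u)" using l by simp
    fix i assume "i < length v"
    then show "v ! i = flip c u ! i" using c l by (auto simp: nth_flip)
  qed
  with cq show ?thesis by auto
qed

lemma flip_c_eq: assumes "c < length w" "d < length w" "flip c w = flip d w" shows "c = d"
proof (rule ccontr)
  assume "c \<noteq> d"
  have "flip c w ! c = flip d w ! c" using assms by simp
  moreover have "flip c w ! c = (\<not> w ! c)" "flip d w ! c = w ! c"
    using assms(1,2) \<open>c \<noteq> d\<close> by (simp_all add: nth_flip)
  ultimately show False by simp
qed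

lemma flip_ne: assumes "c < length w" shows "flip c w \<noteq> w"
proof
  assume "flip c w = w"
  hence "flip c w ! c = w ! c" by simp
  moreover have "flip c w ! c = (\<not> w ! c)" using assms by (simp add: nth_flip)
  ultimately show False by simp
qed

lemma edge_img_Suc: "edge_img (P v) (Suc k) = {P v k, st k (P v k)}"
  by (simp add: edge_img_def)

lemma cover_pick: assumes "length u = 2*n" "c < 2*n" "k = c div 2"
  shows "fc k u = c \<or> fc k (flip c u) = c"
proof -
  have ck: "c = 2*k \<or> c = Suc (2*k)" using assms(3) by presburger
  have "k < n" using assms by simp
  hence s: "Suc (2*k) < length u" using assms(1) by linarith
  from ck show ?thesis
  proof
    assume c: "c = 2*k"
    show ?thesis using s by (auto simp: c fc_def nth_flip)
  next
    assume c: "c = Suc (2*k)"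
    show ?thesis using s by (auto simp: c fc_def nth_flip)
  qed
qed

lemma edge_eq_fc: assumes l1: "length a = L" and l2: "length a' = L" and f1: "fc k a < L" and f2: "fc k' a' < L"
  and e: "{a, st k a} = {a', st k' a'}" shows "fc k a = fc k' a'"
proof -
  from e have "(a = a' \<and> st k a = st k' a') \<or> (a = st k' a' \<and> st k a = a')"
    unfolding doubleton_eq_iff .
  then show ?thesis
  proof
    assume h: "a = a' \<and> st k a = st k' a'"
    have h1: "a' = a" using conjunct1[OF h] by (rule sym)
    have fl: "flip (fc k a) a = flip (fc k' a) a" using conjunct2[OF h] unfolding st_def h1 .
    have c1: "fc k a < length a" using f1 l1 by linarith
    have c2: "fc k' a < length a" using f2 l1 l2 unfolding h1 by linarith
    have "fc k a = fc k' a" by (rule flip_c_eq[OF c1 c2 fl])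
    then show ?thesis unfolding h1 .
  next
    assume h: "a = st k' a' \<and> st k a = a'"
    have g1: "flip (fc k a) a = a'" using conjunct2[OF h] unfolding st_def .
    have "a = flip (fc k' a') a'" using conjunct1[OF h] unfolding st_def .
    hence "flip (fc k' a') a = flip (fc k' a') (flip (fc k' a') a')" by (rule arg_cong)
    hence g2: "flip (fc k' a') a = a'" by (simp only: flip_flip)
    have fl: "flip (fc k a) a = flip (fc k' a') a" using g1 g2 by (rule trans[OF _ sym])
    have c1: "fc k a < length a" using f1 l1 by linarith
    have c2: "fc k' a' < length a" using f2 l1 l2 by linarith
    show ?thesis by (rule flip_c_eq[OF c1 c2 fl])
  qed
qed

theorem lemma8:
  fixes n :: nat
  assumes "n \<ge> 1"
  shows "\<exists>p. is_DVOP (hc_verts (2*n)) (hc_adj (2*n)) n p \<and>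
             DVOP_edges (hc_verts (2*n)) n p = graph_edges (hc_verts (2*n)) (hc_adj (2*n))"
proof (intro exI conjI)
  let ?V = "hc_verts (2*n)"
  have adjst: "hc_adj (2*n) w (st k w)" if "length w = 2*n" "k < n" for w k
  proof -
    have "fc k w < 2*n" using fc_range[of k w] that by auto
    thus ?thesis using that card_flip[of w "2*n" "fc k w"]
      by (auto simp: hc_adj_def hc_verts_def st_def)
  qed
  show dv: "is_DVOP ?V (hc_adj (2*n)) n P"
    unfolding is_DVOP_def
  proof (intro conjI ballI impI)
    fix v assume v: "v \<in> ?V"
    hence lv: "length v = 2*n" by (simp add: hc_verts_def)
    show "path_embedding ?V (hc_adj (2 * n)) n (P v)"
      unfolding path_embedding_def
    proof (intro conjI ballI)
      show "inj_on (P v) {0..n}" using P_inj_on lv by blast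
      fix j assume "j \<in> {0..n}" then show "P v j \<in> ?V" using lv by (simp add: hc_verts_def)
    next
      fix j assume j: "j \<in> {1..n}"
      then obtain k where k: "j = Suc k" "k < n" by (cases j) auto
      show "hc_adj (2*n) (P v (j - 1)) (P v j)" using k adjst[of "P v k" k] lv by simp
    qed
    show "P v 0 = v" by simp
  next
    fix v v' j j' assume v: "v \<in> ?V" and v': "v' \<in> ?V" and j: "j \<in> {1..n}" and j': "j' \<in> {1..n}"
      and eq: "edge_img (P v) j = edge_img (P v') j'"
    have lv: "length v = 2*n" "length v' = 2*n" using v v' by (auto simp: hc_verts_def)
    obtain k where k: "j = Suc k" "k < n" using j by (cases j) auto
    obtain k' where k': "j' = Suc k'" "k' < n" using j' by (cases j') auto
    define a where "a = P v k"
    define a' where "a' = P v' k'"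
    have la: "length a = 2*n" "length a' = 2*n" using lv by (auto simp: a_def a'_def)
    have e1: "edge_img (P v) j = {a, st k a}" by (simp only: k(1) edge_img_Suc a_def)
    have e2: "edge_img (P v') j' = {a', st k' a'}" by (simp only: k'(1) edge_img_Suc a'_def)
    have e: "{a, st k a} = {a', st k' a'}" unfolding e1[symmetric] e2[symmetric] by (rule eq)
    have fr: "fc k a < 2*n" "fc k' a' < 2*n"
      using fc_range[of k a] fc_range[of k' a'] k k' by auto
    have "fc k a = fc k' a'" by (rule edge_eq_fc[OF la fr e])
    hence kk: "k = k'" using fc_range[of k a] fc_range[of k' a'] by auto
    have "a = a'"
    proof (rule ccontr)
      assume "a \<noteq> a'"
      with e have h: "a = st k' a'" "a' = st k a" by (auto simp: doubleton_eq_iff)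
      have h1: "st k a' = a" using h(1) kk by simp
      have "st k (st k a) = a" by (simp only: h(2)[symmetric] h1)
      thus False using st2_ne[of k a] la k by simp
    qed
    thus "v = v'" using P_inj[of v n v' k] lv k kk by (simp add: a_def a'_def)
    show "j = j'" using k k' kk by simp
  qed
  show "DVOP_edges ?V n P = graph_edges ?V (hc_adj (2*n))"
  proof
    show "DVOP_edges ?V n P \<subseteq> graph_edges ?V (hc_adj (2*n))"
    proof
      fix e assume "e \<in> DVOP_edges ?V n P"
      then obtain v j where vj: "e = edge_img (P v) j" "v \<in> ?V" "j \<in> {1..n}"
        by (auto simp: DVOP_edges_def)
      then obtain k where k: "j = Suc k" "k < n" by (cases j) auto
      have lv: "length v = 2*n" using vj by (simp add: hc_verts_def)
      have "e = {P v k, st k (P v k)} \<and> P v k \<in> ?V \<and> st k (P v k) \<in> ?V \<and> hc_adj (2*n) (P v k) (st k (P v k))"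
        using vj k adjst[of "P v k" k] lv by (auto simp: edge_img_Suc hc_verts_def)
      then show "e \<in> graph_edges ?V (hc_adj (2*n))"
        unfolding graph_edges_def by blast
    qed
  next
    show "graph_edges ?V (hc_adj (2*n)) \<subseteq> DVOP_edges ?V n P"
    proof
      fix e assume "e \<in> graph_edges ?V (hc_adj (2*n))"
      then obtain u v where uv: "e = {u, v}" "u \<in> ?V" "v \<in> ?V" "hc_adj (2*n) u v"
        by (auto simp: graph_edges_def)
      obtain c where c: "c < 2*n" "v = flip c u" using adj_flip[OF uv(4)] by auto
      have lu: "length u = 2*n" "length v = 2*n" using uv by (auto simp: hc_verts_def)
      define k where "k = c div 2"
      have kn: "k < n" using c(1) unfolding k_def by presburger
      have "\<exists>w. length w = 2*n \<and> e = {w, flip c w} \<and> fc k w = c"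
      proof (cases "fc k u = c")
        case True then show ?thesis using uv(1) c(2) lu(1) by (intro exI[of _ u]) simp
      next
        case False
        have "fc k v = c"
          using False cover_pick[of u n c k] c lu k_def by simp
        moreover have "e = {v, flip c v}" using uv(1) c(2) by (simp add: insert_commute)
        ultimately show ?thesis using lu(2) by (intro exI[of _ v]) simp
      qed
      then obtain w where w: "length w = 2*n" "e = {w, flip c w}" "fc k w = c" by auto
      obtain x where x: "length x = 2*n" "P x k = w" using P_surj[of w n k] w(1) kn by auto
      have "e = edge_img (P x) (Suc k)" unfolding edge_img_Suc x(2) st_def w(3) by (rule w(2))
      moreover have "x \<in> ?V" "Suc k \<in> {1..n}" using x kn by (auto simp: hc_verts_def)
      ultimately show "e \<in> DVOP_edges ?V n P" unfolding DVOP_edges_def by blast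
    qed
  qed
qed

end
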